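(* Let $X$ be a compact Hausdorff space and $\varphi:X\to X$ a continuous surjection. Then the canonical homeomorphism extension $(\tilde X,\tilde\varphi)$ of $(X,\varphi)$ is minimal.
   Context: A system $(Y,\psi)$ ($Y$ compact Hausdorff, $\psi$ a continuous surjection) is an extension of $(X,\varphi)$ if there is a continuous surjection $p:Y\to X$ (the extension map) with $p\circ\psi=\varphi\circ p$; if $p$ is a homeomorphism it is a conjugacy, and the systems are conjugate. A homeomorphism extension is an extension in which $\psi$ is a homeomorphism. The canonical homeomorphism extension: $\tilde X=\{(x_1,x_2,\dots)\in\prod_{n\ge1}X : x_n=\varphi(x_{n+1})\ \forall n\}$ with product topology, $\tilde\varphi(x_1,x_2,\dots)=(\varphi(x_1),x_1,x_2,\dots)$, extension map $p(x_1,x_2,\dots)=x_1$. A homeomorphism extension $(Y,\psi)$ of $(X,\varphi)$ is minimal if whenever $(Z,\sigma)$ is a homeomorphism extension of $(X,\varphi)$ and $(Y,\psi)$ is an extension of $(Z,\sigma)$ such that the composition of the extension map of $Z$ over $X$ with the extension map of $Y$ over $Z$ equals the extension map of $Y$ over $X$, then $(Y,\psi)$ and $(Z,\sigma)$ are conjugate. *)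

theory Defs
  imports "HOL-Analysis.Analysis"
begin

definition dyn_system :: "'a topology \<Rightarrow> ('a \<Rightarrow> 'a) \<Rightarrow> bool" where
  "dyn_system X f \<longleftrightarrow> compact_space X \<and> Hausdorff_space X \<and>
     continuous_map X X f \<and> f ` topspace X = topspace X"

definition is_extension :: "'b topology \<Rightarrow> ('b \<Rightarrow> 'b) \<Rightarrow> 'a topology \<Rightarrow> ('a \<Rightarrow> 'a) \<Rightarrow> ('b \<Rightarrow> 'a) \<Rightarrow> bool" where
  "is_extension Y g X f p \<longleftrightarrow> dyn_system Y g \<and> dyn_system X f \<and>
     continuous_map Y X p \<and> p ` topspace Y = topspace X \<and>
     (\<forall>y\<in>topspace Y. p (g y) = f (p y))"

definition homeo_extension :: "'b topology \<Rightarrow> ('b \<Rightarrow> 'b) \<Rightarrow> 'a topology \<Rightarrow> ('a \<Rightarrow> 'a) \<Rightarrow> ('b \<Rightarrow> 'a) \<Rightarrow> bool" where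
  "homeo_extension Y g X f p \<longleftrightarrow> is_extension Y g X f p \<and> homeomorphic_map Y Y g"

definition conjugate :: "'b topology \<Rightarrow> ('b \<Rightarrow> 'b) \<Rightarrow> 'a topology \<Rightarrow> ('a \<Rightarrow> 'a) \<Rightarrow> bool" where
  "conjugate Y g X f \<longleftrightarrow> (\<exists>p. is_extension Y g X f p \<and> homeomorphic_map Y X p)"

text \<open>Minimal homeomorphism extension, tested against all homeomorphism
  extensions (Z,s) whose carrier type is 'z (the type is an explicit parameter;
  a theorem with 'z free holds for all carrier types).\<close>
definition minimal_homeo_extension ::
  "'z itself \<Rightarrow> 'b topology \<Rightarrow> ('b \<Rightarrow> 'b) \<Rightarrow> 'a topology \<Rightarrow> ('a \<Rightarrow> 'a) \<Rightarrow> ('b \<Rightarrow> 'a) \<Rightarrow> bool" where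
  "minimal_homeo_extension (_::'z itself) Y g X f p \<longleftrightarrow> homeo_extension Y g X f p \<and>
     (\<forall>(Z::'z topology) s q r.
        homeo_extension Z s X f q \<and> is_extension Y g Z s r \<and>
        (\<forall>y\<in>topspace Y. q (r y) = p y) \<longrightarrow> conjugate Y g Z s)"

text \<open>Canonical homeomorphism extension (sequences indexed from 0 instead of 1).\<close>
definition canon_space :: "'a topology \<Rightarrow> ('a \<Rightarrow> 'a) \<Rightarrow> (nat \<Rightarrow> 'a) topology" where
  "canon_space X f = subtopology (product_topology (\<lambda>_. X) UNIV)
     {x. (\<forall>n. x n \<in> topspace X) \<and> (\<forall>n. x n = f (x (Suc n)))}"

definition canon_map :: "('a \<Rightarrow> 'a) \<Rightarrow> (nat \<Rightarrow> 'a) \<Rightarrow> (nat \<Rightarrow> 'a)" where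
  "canon_map f x = (\<lambda>n. case n of 0 \<Rightarrow> f (x 0) | Suc m \<Rightarrow> x m)"

definition canon_proj :: "(nat \<Rightarrow> 'a) \<Rightarrow> 'a" where
  "canon_proj x = x 0"

end

theory Submission
  imports Defs
begin

lemma proj_cont: "continuous_map (product_topology (\<lambda>_. X) UNIV) X (\<lambda>x. x k)"
  using continuous_map_product_projection[of k UNIV "\<lambda>_. X"] by simp

lemma canon_topspace:
  "topspace (canon_space X f) = {x. (\<forall>n. x n \<in> topspace X) \<and> (\<forall>n. x n = f (x (Suc n)))}"
  unfolding canon_space_def by (auto simp: PiE_def Pi_def)

lemma canon_topspace2:
  "topspace (canon_space X f) = {x. (\<forall>n. x n \<in> topspace X) \<and> (\<forall>n. f (x (Suc n)) = x n)}"
  unfolding canon_topspace by metis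

lemma canon_closed:
  assumes "Hausdorff_space X" "continuous_map X X f"
  shows "closedin (product_topology (\<lambda>_. X) UNIV)
     {x. (\<forall>n. x n \<in> topspace X) \<and> (\<forall>n. x n = f (x (Suc n)))}"
proof -
  let ?P = "product_topology (\<lambda>_. X) (UNIV::nat set)"
  have c: "closedin ?P {x \<in> topspace ?P. x n = f (x (Suc n))}" for n
    apply (rule closedin_continuous_maps_eq[OF assms(1)])
     apply (simp add: proj_cont)
    apply (rule continuous_map_compose[of _ X, unfolded o_def, OF _ assms(2)])
    apply (simp add: proj_cont)
    done
  have "{x. (\<forall>n. x n \<in> topspace X) \<and> (\<forall>n. x n = f (x (Suc n)))}
        = \<Inter> (range (\<lambda>n. {x \<in> topspace ?P. x n = f (x (Suc n))}))"
    by (auto simp: PiE_def Pi_def)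
  moreover have "closedin ?P (\<Inter> (range (\<lambda>n. {x \<in> topspace ?P. x n = f (x (Suc n))})))"
    apply (rule closedin_Inter)
     apply simp
    using c by blast
  ultimately show ?thesis by simp
qed

lemma canon_dyn:
  assumes "compact_space X" and "Hausdorff_space X"
    and "continuous_map X X f" and "f ` topspace X = topspace X"
  shows "dyn_system (canon_space X f) (canon_map f)"
    and "homeomorphic_map (canon_space X f) (canon_space X f) (canon_map f)"
proof -
  let ?P = "product_topology (\<lambda>_. X) (UNIV::nat set)"
  let ?S = "{x. (\<forall>n. x n \<in> topspace X) \<and> (\<forall>n. x n = f (x (Suc n)))}"
  have cp: "compact_space ?P"
    using assms(1) by (simp add: compact_space_product_topology)
  have comp: "compact_space (canon_space X f)"
    unfolding canon_space_def
    by (rule compact_space_subtopology[OF closedin_compact_space[OF cp canon_closed[OF assms(2,3)]]])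
  have haus: "Hausdorff_space (canon_space X f)"
    unfolding canon_space_def
    by (rule Hausdorff_space_subtopology) (simp add: Hausdorff_space_product_topology assms(2))
  have cont: "continuous_map (canon_space X f) (canon_space X f) (canon_map f)"
    unfolding canon_space_def
  proof (rule continuous_map_into_subtopology)
    show "continuous_map (subtopology ?P ?S) ?P (canon_map f)"
      unfolding continuous_map_componentwise_UNIV
    proof
      fix k
      show "continuous_map (subtopology ?P ?S) X (\<lambda>x. canon_map f x k)"
      proof (cases k)
        case 0
        then show ?thesis unfolding canon_map_def
          apply simp
          apply (rule continuous_map_from_subtopology)
          apply (rule continuous_map_compose[of _ X, unfolded o_def, OF _ assms(3)])
          apply (simp add: proj_cont)
          done
      next
        case (Suc m)
        then show ?thesis unfolding canon_map_def
          by (simp add: continuous_map_from_subtopology proj_cont)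
      qed
    qed
    show "canon_map f \<in> topspace (subtopology ?P ?S) \<rightarrow> ?S"
    proof
      fix x assume x: "x \<in> topspace (subtopology ?P ?S)"
      then have xS: "\<forall>n. x n \<in> topspace X" "\<forall>n. x n = f (x (Suc n))"
        unfolding topspace_subtopology by blast+
      have f0: "f (x 0) \<in> topspace X"
        using xS(1) continuous_map_image_subset_topspace[OF assms(3)] by blast
      show "canon_map f x \<in> ?S"
      proof (intro CollectI conjI allI)
        fix n show "canon_map f x n \<in> topspace X"
          using f0 xS(1) by (cases n) (auto simp: canon_map_def)
      next
        fix n show "canon_map f x n = f (canon_map f x (Suc n))"
          by (cases n) (simp_all add: canon_map_def xS(2)[rule_format, symmetric])
      qed
    qed
  qed
  have surj: "canon_map f ` topspace (canon_space X f) = topspace (canon_space X f)"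
  proof
    show "canon_map f ` topspace (canon_space X f) \<subseteq> topspace (canon_space X f)"
      using cont continuous_map_image_subset_topspace by blast
    show "topspace (canon_space X f) \<subseteq> canon_map f ` topspace (canon_space X f)"
    proof
      fix x assume x: "x \<in> topspace (canon_space X f)"
      have "x = canon_map f (\<lambda>n. x (Suc n))"
        using x by (intro ext) (auto simp: canon_topspace2 canon_map_def split: nat.splits)
      moreover have "(\<lambda>n. x (Suc n)) \<in> topspace (canon_space X f)"
        using x by (auto simp: canon_topspace2)
      ultimately show "x \<in> canon_map f ` topspace (canon_space X f)" by blast
    qed
  qed
  have inj: "inj_on (canon_map f) (topspace (canon_space X f))"
  proof (rule inj_onI)
    fix x y assume "canon_map f x = canon_map f y"
    then have "\<And>m. canon_map f x (Suc m) = canon_map f y (Suc m)" by simp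
    then have "\<And>m. x m = y m" by (simp add: canon_map_def)
    then show "x = y" by (rule ext)
  qed
  show "dyn_system (canon_space X f) (canon_map f)"
    unfolding dyn_system_def using comp haus cont surj by blast
  show "homeomorphic_map (canon_space X f) (canon_space X f) (canon_map f)"
    by (rule continuous_imp_homeomorphic_map[OF cont comp haus surj inj])
qed

theorem lemma1:
  fixes X :: "'a topology" and f :: "'a \<Rightarrow> 'a"
  assumes "compact_space X" and "Hausdorff_space X"
    and "continuous_map X X f" and "f ` topspace X = topspace X"
  shows "minimal_homeo_extension TYPE('z) (canon_space X f) (canon_map f) X f canon_proj"
proof -
  let ?P = "product_topology (\<lambda>_. X) (UNIV::nat set)"
  let ?S = "{x. (\<forall>n. x n \<in> topspace X) \<and> (\<forall>n. x n = f (x (Suc n)))}"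
  let ?Y = "canon_space X f"
  have dX: "dyn_system X f" unfolding dyn_system_def using assms by blast
  have cproj: "continuous_map ?Y X canon_proj"
    unfolding canon_space_def canon_proj_def
    by (rule continuous_map_from_subtopology) (simp add: proj_cont)
  have sproj: "canon_proj ` topspace ?Y = topspace X"
  proof
    show "canon_proj ` topspace ?Y \<subseteq> topspace X"
      by (auto simp: canon_topspace2 canon_proj_def)
    show "topspace X \<subseteq> canon_proj ` topspace ?Y"
    proof
      fix a assume a: "a \<in> topspace X"
      define b where "b = rec_nat a (\<lambda>n z. SOME y. y \<in> topspace X \<and> f y = z)"
      have b0: "b 0 = a" by (simp add: b_def)
      have bS: "b (Suc n) = (SOME y. y \<in> topspace X \<and> f y = b n)" for n
        by (simp add: b_def)
      have step: "b (Suc n) \<in> topspace X \<and> f (b (Suc n)) = b n"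
        if "b n \<in> topspace X" for n
      proof -
        have "b n \<in> f ` topspace X" using that assms(4) by simp
        then have "\<exists>y. y \<in> topspace X \<and> f y = b n" by (elim imageE) (rule exI, rule conjI, assumption, rule sym)
        then show ?thesis unfolding bS by (rule someI_ex)
      qed
      have bM: "b n \<in> topspace X" for n
        by (induction n) (use a b0 step in auto)
      have bX: "b n \<in> topspace X \<and> f (b (Suc n)) = b n" for n
        using bM step by blast
      have "b \<in> topspace ?Y" using bX by (simp add: canon_topspace2)
      moreover have "canon_proj b = a" by (simp add: b0 canon_proj_def)
      ultimately show "a \<in> canon_proj ` topspace ?Y" by (metis image_eqI)
    qed
  qed
  have comm: "\<forall>y\<in>topspace ?Y. canon_proj (canon_map f y) = f (canon_proj y)"
    by (simp add: canon_proj_def canon_map_def)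
  have he: "homeo_extension ?Y (canon_map f) X f canon_proj"
    unfolding homeo_extension_def is_extension_def
    using canon_dyn[OF assms] dX cproj sproj comm by simp
  show ?thesis
    unfolding minimal_homeo_extension_def
  proof (intro conjI he allI impI)
    fix Z :: "'z topology" and s q r
    assume H: "homeo_extension Z s X f q \<and> is_extension ?Y (canon_map f) Z s r \<and>
        (\<forall>y\<in>topspace ?Y. q (r y) = canon_proj y)"
    then have ext: "is_extension ?Y (canon_map f) Z s r"
      and hs: "homeomorphic_map Z Z s" and qr: "\<forall>y\<in>topspace ?Y. q (r y) = canon_proj y"
      by (auto simp: homeo_extension_def)
    have injs: "inj_on s (topspace Z)" using hs homeomorphic_imp_injective_map by blast
    from ext have cr: "continuous_map ?Y Z r" and sr: "r ` topspace ?Y = topspace Z"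
      and rc: "\<forall>y\<in>topspace ?Y. r (canon_map f y) = s (r y)"
      and dZ: "dyn_system Z s"
      by (auto simp: is_extension_def)
    define sh where "sh n x = (\<lambda>k. x (k + n))" for n and x :: "nat \<Rightarrow> 'a"
    have shY: "x \<in> topspace ?Y \<Longrightarrow> sh n x \<in> topspace ?Y" for x n
      by (auto simp: canon_topspace2 sh_def)
    have shc: "x \<in> topspace ?Y \<Longrightarrow> canon_map f (sh (Suc n) x) = sh n x" for x n
      by (auto simp: canon_topspace2 sh_def canon_map_def fun_eq_iff split: nat.splits)
    have inj: "inj_on r (topspace ?Y)"
    proof (rule inj_onI)
      fix x y assume x: "x \<in> topspace ?Y" and y: "y \<in> topspace ?Y" and e: "r x = r y"
      have R: "r (sh n x) = r (sh n y)" for n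
      proof (induction n)
        case 0
        have "sh 0 x = x" "sh 0 y = y" by (auto simp: sh_def)
        then show ?case using e by simp
      next
        case (Suc n)
        have e1: "s (r (sh (Suc n) x)) = r (sh n x)"
          using rc[rule_format, OF shY[OF x, of "Suc n"]] shc[OF x, of n] by simp
        have e2: "s (r (sh (Suc n) y)) = r (sh n y)"
          using rc[rule_format, OF shY[OF y, of "Suc n"]] shc[OF y, of n] by simp
        have m1: "r (sh (Suc n) x) \<in> topspace Z" using sr shY[OF x] by blast
        have m2: "r (sh (Suc n) y) \<in> topspace Z" using sr shY[OF y] by blast
        have "s (r (sh (Suc n) x)) = s (r (sh (Suc n) y))" using e1 e2 Suc.IH by simp
        then show ?case by (rule inj_onD[OF injs _ m1 m2])
      qed
      have "x n = y n" for n
      proof -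
        have "x n = canon_proj (sh n x)" by (simp add: canon_proj_def sh_def)
        also have "\<dots> = q (r (sh n x))" using qr[rule_format, OF shY[OF x, of n]] by simp
        also have "\<dots> = q (r (sh n y))" using R by simp
        also have "\<dots> = canon_proj (sh n y)" using qr[rule_format, OF shY[OF y, of n]] by simp
        also have "\<dots> = y n" by (simp add: canon_proj_def sh_def)
        finally show ?thesis .
      qed
      then show "x = y" by (simp add: fun_eq_iff)
    qed
    have "homeomorphic_map ?Y Z r"
      apply (rule continuous_imp_homeomorphic_map[OF cr _ _ sr inj])
      using canon_dyn(1)[OF assms] dZ by (auto simp: dyn_system_def)
    then show "conjugate ?Y (canon_map f) Z s"
      unfolding conjugate_def using ext by blast
  qed
qed

end
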